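(* Let $\mathcal{H}$ be a hypergraph on a finite vertex set $V$, let $p\in[0,1]$, $\alpha\in(0,1]$ and $\eta\in(0,1]$. Writing $\mu=\mu_p(\mathcal{H})$ and $\Delta=\Delta_p(\mathcal{H})$, \[ \Pr\big(\nu(\mathcal{H}[V_p])\le \alpha\mu\big)\le \exp\Big(-\big(1-\alpha\log(e/\alpha)-\alpha p-\eta\big)\mu+\big(1+2\alpha p/\eta\big)\Delta\Big). \]
   Context: $V_p$ denotes the random subset of $V$ containing each element independently with probability $p$. For $W\subseteq V$, $\mathcal{H}[W]=\{A\in\mathcal{H}: A\subseteq W\}$. $\nu(\cdot)$ is the matching number (largest number of pairwise disjoint edges). $\mu_p(\mathcal{H})=\sum_{A\in\mathcal{H}}p^{|A|}$ and $\Delta_p(\mathcal{H})=\sum p^{|A\cup B|}$, the sum over unordered pairs $\{A,B\}$ of distinct edges of $\mathcal{H}$ with $A\cap B\neq\emptyset$. *)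

theory Defs
  imports Complex_Main
begin

definition induced :: "'a set set \<Rightarrow> 'a set \<Rightarrow> 'a set set" where
  "induced H W = {A \<in> H. A \<subseteq> W}"

definition matching_number :: "'a set set \<Rightarrow> nat" where
  "matching_number H = Max {card M | M. M \<subseteq> H \<and> pairwise disjnt M}"

definition mu_p :: "real \<Rightarrow> 'a set set \<Rightarrow> real" where
  "mu_p p H = (\<Sum>A\<in>H. p ^ card A)"

definition Delta_p :: "real \<Rightarrow> 'a set set \<Rightarrow> real" where
  "Delta_p p H = (\<Sum>P\<in>{P. P \<subseteq> H \<and> card P = 2 \<and> \<Inter>P \<noteq> {}}. p ^ card (\<Union>P))"

(* probability that the binomial random subset V_p satisfies Q *)
definition prob_rand_subset :: "'a set \<Rightarrow> real \<Rightarrow> ('a set \<Rightarrow> bool) \<Rightarrow> real" where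
  "prob_rand_subset V p Q =
     (\<Sum>W\<in>{W. W \<subseteq> V \<and> Q W}. p ^ card W * (1 - p) ^ card (V - W))"

end

theory Submission
  imports Defs
begin

definition wt :: "'a set \<Rightarrow> real \<Rightarrow> 'a set \<Rightarrow> real" where
  "wt X p W = p ^ card W * (1 - p) ^ card (X - W)"

lemma prob_sum: "finite V \<Longrightarrow> prob_rand_subset V p Q = (\<Sum>W\<in>Pow V. if Q W then wt V p W else 0)"
  unfolding prob_rand_subset_def wt_def
  by (simp add: sum.inter_filter[symmetric] Pow_def conj_commute)

lemma wt_nonneg: "0 \<le> p \<Longrightarrow> p \<le> 1 \<Longrightarrow> 0 \<le> wt X p W"
  unfolding wt_def by simp

lemma wt_union:
  assumes "finite V" "S \<subseteq> V" "W1 \<subseteq> S" "W2 \<subseteq> V - S"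
  shows "wt V p (W1 \<union> W2) = wt S p W1 * wt (V - S) p W2"
proof -
  have f: "finite S" "finite (V - S)" using assms finite_subset by auto
  have "card (W1 \<union> W2) = card W1 + card W2"
    using assms f by (intro card_Un_disjoint) (auto intro: finite_subset)
  moreover have "V - (W1 \<union> W2) = (S - W1) \<union> ((V - S) - W2)" using assms by auto
  moreover have "card ((S - W1) \<union> ((V - S) - W2)) = card (S - W1) + card ((V - S) - W2)"
    using f by (intro card_Un_disjoint) auto
  ultimately show ?thesis unfolding wt_def by (simp add: power_add)
qed

lemma decomp:
  assumes "finite V" "S \<subseteq> V"
  shows "(\<Sum>W\<in>Pow V. wt V p W * f W) =
     (\<Sum>W1\<in>Pow S. wt S p W1 * (\<Sum>W2\<in>Pow (V - S). wt (V - S) p W2 * f (W1 \<union> W2)))"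
proof -
  have bij: "bij_betw (\<lambda>(W1, W2). W1 \<union> W2) (Pow S \<times> Pow (V - S)) (Pow V)"
  proof (rule bij_betw_byWitness[where f' = "\<lambda>W. (W \<inter> S, W - S)"])
    show "\<forall>a\<in>Pow S \<times> Pow (V - S). (\<lambda>W. (W \<inter> S, W - S)) ((\<lambda>(W1, W2). W1 \<union> W2) a) = a" by auto
    show "(\<lambda>(W1, W2). W1 \<union> W2) ` (Pow S \<times> Pow (V - S)) \<subseteq> Pow V" using assms by auto
    show "(\<lambda>W. (W \<inter> S, W - S)) ` Pow V \<subseteq> Pow S \<times> Pow (V - S)" by auto
    show "\<forall>a'\<in>Pow V. (\<lambda>(W1, W2). W1 \<union> W2) ((\<lambda>W. (W \<inter> S, W - S)) a') = a'" by auto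
  qed
  have "(\<Sum>W\<in>Pow V. wt V p W * f W) = (\<Sum>(W1,W2)\<in>Pow S \<times> Pow (V - S). wt V p (W1 \<union> W2) * f (W1 \<union> W2))"
    using sum.reindex_bij_betw[OF bij, of "\<lambda>W. wt V p W * f W"] by (simp add: case_prod_beta)
  also have "\<dots> = (\<Sum>(W1,W2)\<in>Pow S \<times> Pow (V - S). wt S p W1 * (wt (V - S) p W2 * f (W1 \<union> W2)))"
    using assms by (intro sum.cong refl) (auto simp: wt_union)
  also have "\<dots> = (\<Sum>W1\<in>Pow S. \<Sum>W2\<in>Pow (V - S). wt S p W1 * (wt (V - S) p W2 * f (W1 \<union> W2)))"
    by (rule sum.cartesian_product[symmetric])
  finally show ?thesis by (simp add: sum_distrib_left)
qed

lemma wt_total: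
  assumes "finite X" "0 \<le> p" "p \<le> 1"
  shows "(\<Sum>W\<in>Pow X. wt X p W) = 1"
  using assms(1)
proof (induction X rule: finite_induct)
  case empty
  then show ?case by (simp add: wt_def)
next
  case (insert x F)
  have "(\<Sum>W\<in>Pow (insert x F). wt (insert x F) p W * 1) =
     (\<Sum>W1\<in>Pow {x}. wt {x} p W1 * (\<Sum>W2\<in>Pow (insert x F - {x}). wt (insert x F - {x}) p W2 * 1))"
    using insert by (intro decomp) auto
  also have "insert x F - {x} = F" using insert by auto
  also have "Pow {x} = {{}, {x}}" by auto
  finally show ?case using insert by (simp add: wt_def)
qed

lemma prob_sum': "finite V \<Longrightarrow> prob_rand_subset V p Q = (\<Sum>W\<in>Pow V. wt V p W * (if Q W then 1 else 0))"
  by (simp add: prob_sum if_distrib cong: if_cong)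

lemma prob_decomp:
  assumes "finite V" "S \<subseteq> V"
  shows "prob_rand_subset V p Q = (\<Sum>W1\<in>Pow S. wt S p W1 * prob_rand_subset (V - S) p (\<lambda>W2. Q (W1 \<union> W2)))"
  using assms by (simp add: prob_sum' decomp[OF assms] finite_subset)

lemma prob_nonneg: "finite V \<Longrightarrow> 0 \<le> p \<Longrightarrow> p \<le> 1 \<Longrightarrow> 0 \<le> prob_rand_subset V p Q"
  by (simp add: prob_sum' sum_nonneg wt_nonneg)

lemma prob_le1: "finite V \<Longrightarrow> 0 \<le> p \<Longrightarrow> p \<le> 1 \<Longrightarrow> prob_rand_subset V p Q \<le> 1"
proof -
  assume a: "finite V" "0 \<le> p" "p \<le> 1"
  have "prob_rand_subset V p Q \<le> (\<Sum>W\<in>Pow V. wt V p W)"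
    unfolding prob_sum'[OF a(1)] by (intro sum_mono) (use a wt_nonneg in auto)
  with wt_total[OF a] show ?thesis by simp
qed

lemma prob_mono:
  assumes "finite V" "0 \<le> p" "p \<le> 1" "\<And>W. W \<subseteq> V \<Longrightarrow> Q W \<Longrightarrow> R W"
  shows "prob_rand_subset V p Q \<le> prob_rand_subset V p R"
  unfolding prob_sum'[OF assms(1)] by (intro sum_mono) (use assms wt_nonneg in auto)

lemma prob_cong:
  assumes "\<And>W. W \<subseteq> V \<Longrightarrow> Q W = R W"
  shows "prob_rand_subset V p Q = prob_rand_subset V p R"
  unfolding prob_rand_subset_def using assms by (intro sum.cong) auto

lemma prob_contains:
  assumes "finite V" "S \<subseteq> V"
  shows "prob_rand_subset V p (\<lambda>W. S \<subseteq> W \<and> g W) = p ^ card S * prob_rand_subset (V - S) p (\<lambda>W. g (S \<union> W))"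
proof -
  have "prob_rand_subset V p (\<lambda>W. S \<subseteq> W \<and> g W) =
     (\<Sum>W1\<in>Pow S. wt S p W1 * prob_rand_subset (V - S) p (\<lambda>W2. S \<subseteq> W1 \<union> W2 \<and> g (W1 \<union> W2)))"
    by (rule prob_decomp[OF assms])
  also have "\<dots> = (\<Sum>W1\<in>{S}. wt S p W1 * prob_rand_subset (V - S) p (\<lambda>W2. S \<subseteq> W1 \<union> W2 \<and> g (W1 \<union> W2)))"
  proof (rule sum.mono_neutral_cong_right)
    show "finite (Pow S)" using assms finite_subset by blast
    show "\<forall>W1\<in>Pow S - {S}. wt S p W1 * prob_rand_subset (V - S) p (\<lambda>W2. S \<subseteq> W1 \<union> W2 \<and> g (W1 \<union> W2)) = 0"
    proof
      fix W1 assume W1: "W1 \<in> Pow S - {S}"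
      have "prob_rand_subset (V - S) p (\<lambda>W2. S \<subseteq> W1 \<union> W2 \<and> g (W1 \<union> W2)) = prob_rand_subset (V - S) p (\<lambda>W2. False)"
        using W1 by (intro prob_cong) auto
      then show "wt S p W1 * prob_rand_subset (V - S) p (\<lambda>W2. S \<subseteq> W1 \<union> W2 \<and> g (W1 \<union> W2)) = 0"
        by (simp add: prob_rand_subset_def)
    qed
  qed auto
  finally show ?thesis by (simp add: wt_def)
qed

lemma prob_decreasing:
  assumes "finite V" "S \<subseteq> V" "0 \<le> p" "p \<le> 1"
    and dec: "\<And>W W'. W \<subseteq> W' \<Longrightarrow> W' \<subseteq> V \<Longrightarrow> g W' \<Longrightarrow> g W"
  shows "prob_rand_subset (V - S) p (\<lambda>W. g (S \<union> W)) \<le> prob_rand_subset V p g"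
proof -
  have fS: "finite S" using assms finite_subset by blast
  have "prob_rand_subset (V - S) p (\<lambda>W. g (S \<union> W)) = (\<Sum>W1\<in>Pow S. wt S p W1) * prob_rand_subset (V - S) p (\<lambda>W. g (S \<union> W))"
    using wt_total[OF fS assms(3,4)] by simp
  also have "\<dots> = (\<Sum>W1\<in>Pow S. wt S p W1 * prob_rand_subset (V - S) p (\<lambda>W. g (S \<union> W)))"
    by (simp add: sum_distrib_right)
  also have "\<dots> \<le> (\<Sum>W1\<in>Pow S. wt S p W1 * prob_rand_subset (V - S) p (\<lambda>W2. g (W1 \<union> W2)))"
  proof (rule sum_mono, rule mult_left_mono)
    fix W1 assume W1: "W1 \<in> Pow S"
    show "0 \<le> wt S p W1" using assms wt_nonneg by blast
    show "prob_rand_subset (V - S) p (\<lambda>W. g (S \<union> W)) \<le> prob_rand_subset (V - S) p (\<lambda>W2. g (W1 \<union> W2))"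
    proof (rule prob_mono)
      fix W assume "W \<subseteq> V - S" "g (S \<union> W)"
      moreover have "W1 \<union> W \<subseteq> S \<union> W" "S \<union> W \<subseteq> V" using W1 assms \<open>W \<subseteq> V - S\<close> by auto
      ultimately show "g (W1 \<union> W)" using dec by blast
    qed (use assms in auto)
  qed
  also have "\<dots> = prob_rand_subset V p g" by (rule prob_decomp[OF assms(1,2), symmetric])
  finally show ?thesis .
qed

lemma prob_ignore:
  assumes "finite V" "S \<subseteq> V" "0 \<le> p" "p \<le> 1"
    and ign: "\<And>W. W \<subseteq> V \<Longrightarrow> g W = g (W - S)"
  shows "prob_rand_subset V p g = prob_rand_subset (V - S) p g"
proof -
  have fS: "finite S" using assms finite_subset by blast
  have "prob_rand_subset V p g = (\<Sum>W1\<in>Pow S. wt S p W1 * prob_rand_subset (V - S) p (\<lambda>W2. g (W1 \<union> W2)))"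
    by (rule prob_decomp[OF assms(1,2)])
  also have "\<dots> = (\<Sum>W1\<in>Pow S. wt S p W1 * prob_rand_subset (V - S) p g)"
  proof (intro sum.cong refl arg_cong2[where f="(*)"] prob_cong)
    fix W1 W assume "W1 \<in> Pow S" "W \<subseteq> V - S"
    then have "(W1 \<union> W) - S = W" "W - S = W" by auto
    moreover have "W1 \<union> W \<subseteq> V" "W \<subseteq> V" using assms \<open>W1 \<in> Pow S\<close> \<open>W \<subseteq> V - S\<close> by auto
    ultimately show "g (W1 \<union> W) = g W" using ign[of "W1 \<union> W"] ign[of W] by metis
  qed
  also have "\<dots> = prob_rand_subset (V - S) p g"
    using wt_total[OF fS assms(3,4)] by (simp add: sum_distrib_right[symmetric])
  finally show ?thesis .
qed

lemma prob_split: "finite V \<Longrightarrow> prob_rand_subset V p Q = prob_rand_subset V p (\<lambda>W. Q W \<and> R W) + prob_rand_subset V p (\<lambda>W. Q W \<and> \<not> R W)"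
  unfolding prob_sum' by (auto simp: sum.distrib[symmetric] intro!: sum.cong)

lemma prob_sub_add:
  assumes "finite V" "finite I" "0 \<le> p" "p \<le> 1"
    and "\<And>W. W \<subseteq> V \<Longrightarrow> Q W \<Longrightarrow> R W \<or> (\<exists>i\<in>I. S i W)"
  shows "prob_rand_subset V p Q \<le> prob_rand_subset V p R + (\<Sum>i\<in>I. prob_rand_subset V p (S i))"
proof -
  have "prob_rand_subset V p Q \<le> (\<Sum>W\<in>Pow V. wt V p W * ((if R W then 1 else 0) + (\<Sum>i\<in>I. if S i W then 1 else 0)))"
    unfolding prob_sum'[OF assms(1)]
  proof (rule sum_mono, rule mult_left_mono)
    fix W assume W: "W \<in> Pow V"
    show "0 \<le> wt V p W" using assms wt_nonneg by blast
    show "(if Q W then 1 else 0) \<le> (if R W then 1 else 0) + (\<Sum>i\<in>I. if S i W then 1 else (0::real))"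
    proof (cases "Q W")
      case True
      then have "R W \<or> (\<exists>i\<in>I. S i W)" using assms(5) W by blast
      then show ?thesis
      proof
        assume "R W" then show ?thesis by (simp add: sum_nonneg)
      next
        assume "\<exists>i\<in>I. S i W"
        then obtain i where i: "i \<in> I" "S i W" by blast
        have "(\<Sum>i\<in>{i}. if S i W then 1 else (0::real)) \<le> (\<Sum>i\<in>I. if S i W then 1 else 0)"
          using i assms(2) by (intro sum_mono2) auto
        then show ?thesis using i by simp
      qed
    qed (simp add: sum_nonneg)
  qed
  also have "\<dots> = prob_rand_subset V p R + (\<Sum>i\<in>I. prob_rand_subset V p (S i))"
    unfolding prob_sum'[OF assms(1)] distrib_left sum.distrib sum_distrib_left
    by (subst sum.swap) simp
  finally show ?thesis .
qed

lemma union_bound: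
  assumes "finite V" "finite I" "0 \<le> p" "p \<le> 1"
  shows "prob_rand_subset V p (\<lambda>W. \<exists>i\<in>I. S i W) \<le> (\<Sum>i\<in>I. prob_rand_subset V p (S i))"
  using prob_sub_add[OF assms, of "\<lambda>W. \<exists>i\<in>I. S i W" "\<lambda>W. False" S]
  by (simp add: prob_rand_subset_def)

definition pairs :: "'a set set \<Rightarrow> 'a set set set" where
  "pairs H = {P. P \<subseteq> H \<and> card P = 2 \<and> \<Inter>P \<noteq> {}}"

lemma Delta_pairs: "Delta_p p H = (\<Sum>P\<in>pairs H. p ^ card (\<Union>P))"
  unfolding Delta_p_def pairs_def ..

lemma finite_pairs: "finite H \<Longrightarrow> finite (pairs H)"
  unfolding pairs_def by (rule finite_subset[of _ "Pow H"]) auto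

lemma Delta_nonneg: "0 \<le> p \<Longrightarrow> 0 \<le> Delta_p p H"
  unfolding Delta_pairs by (simp add: sum_nonneg)

lemma Delta_mono: "finite H' \<Longrightarrow> H \<subseteq> H' \<Longrightarrow> 0 \<le> p \<Longrightarrow> Delta_p p H \<le> Delta_p p H'"
  unfolding Delta_pairs by (intro sum_mono2 finite_pairs) (auto simp: pairs_def)

lemma Delta_insert:
  assumes "finite H" "A \<notin> H"
  shows "Delta_p p (insert A H) = Delta_p p H + (\<Sum>B\<in>{B\<in>H. A \<inter> B \<noteq> {}}. p ^ card (A \<union> B))"
proof -
  have eq: "pairs (insert A H) = pairs H \<union> (\<lambda>B. {A, B}) ` {B\<in>H. A \<inter> B \<noteq> {}}"
  proof (intro equalityI subsetI)
    fix P assume P: "P \<in> pairs (insert A H)"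
    then obtain X Y where XY: "P = {X, Y}" "X \<noteq> Y" unfolding pairs_def by (auto simp: card_2_iff)
    show "P \<in> pairs H \<union> (\<lambda>B. {A, B}) ` {B\<in>H. A \<inter> B \<noteq> {}}"
    proof (cases "A \<in> P")
      case False then show ?thesis using P unfolding pairs_def by auto
    next
      case True
      obtain B where B: "P = {A, B}" "A \<noteq> B"
      proof (cases "A = X")
        case True then show ?thesis using that XY by blast
      next
        case False then have "A = Y" using \<open>A \<in> P\<close> XY by blast
        then show ?thesis using that XY by blast
      qed
      have "B \<in> H" using P B unfolding pairs_def by blast
      moreover have "A \<inter> B \<noteq> {}" using P B unfolding pairs_def by simp
      ultimately show ?thesis using B by blast
    qed
  next
    fix P assume "P \<in> pairs H \<union> (\<lambda>B. {A, B}) ` {B\<in>H. A \<inter> B \<noteq> {}}"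
    then show "P \<in> pairs (insert A H)" using assms unfolding pairs_def by (auto simp: card_2_iff)
  qed
  have disj: "pairs H \<inter> (\<lambda>B. {A, B}) ` {B\<in>H. A \<inter> B \<noteq> {}} = {}"
    using assms unfolding pairs_def by auto
  have inj: "inj_on (\<lambda>B. {A, B}) {B\<in>H. A \<inter> B \<noteq> {}}"
    using assms by (auto simp: inj_on_def doubleton_eq_iff)
  show ?thesis unfolding Delta_pairs eq
    by (subst sum.union_disjoint) (use assms finite_pairs disj in \<open>auto simp: sum.reindex[OF inj]\<close>)
qed

lemma mu_insert: "finite H \<Longrightarrow> A \<notin> H \<Longrightarrow> mu_p p (insert A H) = p ^ card A + mu_p p H"
  unfolding mu_p_def by simp

lemma mu_nonneg: "0 \<le> p \<Longrightarrow> 0 \<le> mu_p p H"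
  unfolding mu_p_def by (simp add: sum_nonneg)

lemma janson_step:
  assumes V: "finite V" and G: "G \<subseteq> Pow V" "finite G" and A: "A \<subseteq> V" and p: "0 \<le> p" "p \<le> 1"
  defines "C \<equiv> \<lambda>W. \<forall>B\<in>G. \<not> B \<subseteq> W"
  shows "prob_rand_subset V p (\<lambda>W. \<forall>B\<in>insert A G. \<not> B \<subseteq> W) \<le>
      exp ((\<Sum>B\<in>{B\<in>G. A \<inter> B \<noteq> {}}. p ^ card (A \<union> B)) - p ^ card A) * prob_rand_subset V p C"
proof -
  define E where "E = (\<lambda>W. \<forall>B\<in>G. B \<inter> A = {} \<longrightarrow> \<not> B \<subseteq> W)"
  define Gi where "Gi = {B\<in>G. A \<inter> B \<noteq> {}}"
  define s where "s = (\<Sum>B\<in>Gi. p ^ card (A \<union> B))"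
  define x where "x = p ^ card A"
  define c where "c = prob_rand_subset V p C"
  define e where "e = prob_rand_subset V p E"
  define q where "q = prob_rand_subset V p (\<lambda>W. C W \<and> A \<subseteq> W)"
  have fGi: "finite Gi" using G unfolding Gi_def by auto
  have split: "c = prob_rand_subset V p (\<lambda>W. \<forall>B\<in>insert A G. \<not> B \<subseteq> W) + q"
  proof -
    have "c = prob_rand_subset V p (\<lambda>W. C W \<and> A \<subseteq> W) + prob_rand_subset V p (\<lambda>W. C W \<and> \<not> A \<subseteq> W)"
      unfolding c_def by (rule prob_split[OF V])
    moreover have "prob_rand_subset V p (\<lambda>W. C W \<and> \<not> A \<subseteq> W) = prob_rand_subset V p (\<lambda>W. \<forall>B\<in>insert A G. \<not> B \<subseteq> W)"
      unfolding C_def by (intro prob_cong) auto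
    ultimately show ?thesis unfolding q_def by simp
  qed
  have E_ign: "\<And>W. E W = E (W - A)" unfolding E_def by blast
  have e_eq: "prob_rand_subset V p (\<lambda>W. A \<subseteq> W \<and> E W) = x * e"
  proof -
    have "prob_rand_subset V p (\<lambda>W. A \<subseteq> W \<and> E W) = x * prob_rand_subset (V - A) p (\<lambda>W. E (A \<union> W))"
      unfolding x_def by (rule prob_contains[OF V A])
    also have "prob_rand_subset (V - A) p (\<lambda>W. E (A \<union> W)) = prob_rand_subset (V - A) p E"
    proof (rule prob_cong)
      fix W assume "W \<subseteq> V - A"
      then have "(A \<union> W) - A = W" by auto
      then show "E (A \<union> W) = E W" using E_ign[of "A \<union> W"] by simp
    qed
    also have "\<dots> = e" unfolding e_def by (rule prob_ignore[OF V A p, symmetric]) (rule E_ign)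
    finally show ?thesis .
  qed
  have E_dec: "\<And>W W'. W \<subseteq> W' \<Longrightarrow> W' \<subseteq> V \<Longrightarrow> E W' \<Longrightarrow> E W" unfolding E_def by blast
  have pair_le: "prob_rand_subset V p (\<lambda>W. A \<union> B \<subseteq> W \<and> E W) \<le> p ^ card (A \<union> B) * e" if "B \<in> Gi" for B
  proof -
    have AB: "A \<union> B \<subseteq> V" using that A G unfolding Gi_def by auto
    have "prob_rand_subset V p (\<lambda>W. A \<union> B \<subseteq> W \<and> E W) = p ^ card (A \<union> B) * prob_rand_subset (V - (A \<union> B)) p (\<lambda>W. E ((A \<union> B) \<union> W))"
      by (rule prob_contains[OF V AB])
    also have "\<dots> \<le> p ^ card (A \<union> B) * e"
      unfolding e_def by (rule mult_left_mono[OF prob_decreasing[OF V AB p]]) (use E_dec p in auto)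
    finally show ?thesis .
  qed
  have "x * e \<le> q + (\<Sum>B\<in>Gi. prob_rand_subset V p (\<lambda>W. A \<union> B \<subseteq> W \<and> E W))"
    unfolding e_eq[symmetric] q_def
  proof (rule prob_sub_add[OF V fGi p])
    fix W assume "W \<subseteq> V" "A \<subseteq> W \<and> E W"
    then show "(C W \<and> A \<subseteq> W) \<or> (\<exists>B\<in>Gi. A \<union> B \<subseteq> W \<and> E W)"
      unfolding C_def E_def Gi_def by (auto simp: Int_commute)
  qed
  also have "\<dots> \<le> q + (\<Sum>B\<in>Gi. p ^ card (A \<union> B) * e)"
    using pair_le by (intro add_left_mono sum_mono) auto
  also have "(\<Sum>B\<in>Gi. p ^ card (A \<union> B) * e) = s * e" unfolding s_def by (simp add: sum_distrib_right)
  finally have qlow: "(x - s) * e \<le> q" by (simp add: algebra_simps)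
  have ce: "c \<le> e" unfolding c_def e_def by (intro prob_mono[OF V p]) (auto simp: C_def E_def)
  have q0: "0 \<le> q" unfolding q_def by (rule prob_nonneg[OF V p])
  have c0: "0 \<le> c" unfolding c_def by (rule prob_nonneg[OF V p])
  have qc: "(x - s) * c \<le> q"
  proof (cases "0 \<le> x - s")
    case True then show ?thesis using qlow ce by (meson mult_left_mono order.trans)
  next
    case False then show ?thesis using q0 c0 by (meson mult_nonpos_nonneg not_le order.trans less_imp_le)
  qed
  have "prob_rand_subset V p (\<lambda>W. \<forall>B\<in>insert A G. \<not> B \<subseteq> W) = c - q" using split by simp
  also have "\<dots> \<le> (1 + (s - x)) * c" using qc by (simp add: algebra_simps)
  also have "\<dots> \<le> exp (s - x) * c" by (intro mult_right_mono c0 exp_ge_add_one_self)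
  finally show ?thesis unfolding x_def s_def Gi_def c_def .
qed

lemma janson:
  assumes V: "finite V" and G: "G \<subseteq> Pow V" and p: "0 \<le> p" "p \<le> 1"
  shows "prob_rand_subset V p (\<lambda>W. \<forall>B\<in>G. \<not> B \<subseteq> W) \<le> exp (- mu_p p G + Delta_p p G)"
proof -
  have fG: "finite G" using G V by (meson finite_Pow_iff finite_subset)
  show ?thesis using fG G
  proof (induction G rule: finite_induct)
    case empty
    have "Delta_p p ({}::'a set set) = 0" unfolding Delta_pairs pairs_def by (auto intro!: sum.neutral)
    then show ?case using prob_le1[OF V p, of "\<lambda>W. True"] by (simp add: mu_p_def)
  next
    case (insert A G)
    have "prob_rand_subset V p (\<lambda>W. \<forall>B\<in>insert A G. \<not> B \<subseteq> W) \<le>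
      exp ((\<Sum>B\<in>{B\<in>G. A \<inter> B \<noteq> {}}. p ^ card (A \<union> B)) - p ^ card A) * prob_rand_subset V p (\<lambda>W. \<forall>B\<in>G. \<not> B \<subseteq> W)"
      using insert by (intro janson_step[OF V _ _ _ p]) auto
    also have "\<dots> \<le> exp ((\<Sum>B\<in>{B\<in>G. A \<inter> B \<noteq> {}}. p ^ card (A \<union> B)) - p ^ card A) * exp (- mu_p p G + Delta_p p G)"
      using insert by (intro mult_left_mono) auto
    also have "\<dots> = exp (- mu_p p (insert A G) + Delta_p p (insert A G))"
      using insert by (simp add: mu_insert Delta_insert mult_exp_exp algebra_simps)
    finally show ?case .
  qed
qed

lemma sum_UN_le_nonneg:
  fixes f :: "'b \<Rightarrow> real"
  assumes "finite I" "\<And>i. i \<in> I \<Longrightarrow> finite (A i)" "\<And>x. 0 \<le> f x"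
  shows "(\<Sum>x\<in>(\<Union>i\<in>I. A i). f x) \<le> (\<Sum>i\<in>I. \<Sum>x\<in>A i. f x)"
  using assms(1,2)
proof (induction I rule: finite_induct)
  case empty then show ?case by simp
next
  case (insert i I)
  have fin: "finite (A i)" "finite (\<Union>j\<in>I. A j)" using insert by auto
  have "(\<Sum>x\<in>(\<Union>j\<in>insert i I. A j). f x) = (\<Sum>x\<in>A i \<union> (\<Union>j\<in>I. A j). f x)" by simp
  also have "\<dots> \<le> (\<Sum>x\<in>A i. f x) + (\<Sum>x\<in>(\<Union>j\<in>I. A j). f x)"
  proof -
    have "0 \<le> sum f (A i \<inter> (\<Union>j\<in>I. A j))" using assms(3) by (simp add: sum_nonneg)
    then show ?thesis using sum.union_inter[OF fin, of f] by linarith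
  qed
  also have "\<dots> \<le> (\<Sum>x\<in>A i. f x) + (\<Sum>j\<in>I. \<Sum>x\<in>A j. f x)" using insert by simp
  finally show ?case using insert by simp
qed

lemma binom_lower:
  fixes s w :: real
  assumes "0 \<le> s" "0 \<le> w"
  shows "s ^ Suc k + real (Suc k) * w * s ^ k \<le> (s + w) ^ Suc k"
proof (induction k)
  case 0 then show ?case by simp
next
  case (Suc k)
  have "s ^ Suc (Suc k) + real (Suc (Suc k)) * w * s ^ Suc k
      \<le> (s ^ Suc k + real (Suc k) * w * s ^ k) * (s + w)"
    using assms by (simp add: algebra_simps)
  also have "\<dots> \<le> (s + w) ^ Suc k * (s + w)"
    using Suc assms by (intro mult_right_mono) auto
  finally show ?case by (simp add: algebra_simps)
qed

lemma esym_bound: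
  fixes f :: "'b \<Rightarrow> real"
  assumes "finite H" "\<And>A. 0 \<le> f A"
  shows "(\<Sum>M\<in>{M. M \<subseteq> H \<and> card M = j}. \<Prod>A\<in>M. f A) \<le> (\<Sum>A\<in>H. f A) ^ j / fact j"
  using assms(1)
proof (induction H arbitrary: j rule: finite_induct)
  case empty
  have e: "{M. M \<subseteq> {} \<and> card M = j} = (if j = 0 then {{}} else {})" by auto
  show ?case unfolding e by (cases "j = 0") simp_all
next
  case (insert a H)
  define s where "s = (\<Sum>A\<in>H. f A)"
  have s0: "0 \<le> s" unfolding s_def by (simp add: sum_nonneg assms)
  show ?case
  proof (cases j)
    case 0
    then have "{M. M \<subseteq> insert a H \<and> card M = j} = {{}}" using insert by (auto simp: card_eq_0_iff intro: finite_subset)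
    then show ?thesis using 0 by simp
  next
    case (Suc k)
    have eq: "{M. M \<subseteq> insert a H \<and> card M = j} = {M. M \<subseteq> H \<and> card M = j} \<union> insert a ` {M. M \<subseteq> H \<and> card M = k}"
    proof (intro equalityI subsetI)
      fix M assume M: "M \<in> {M. M \<subseteq> insert a H \<and> card M = j}"
      show "M \<in> {M. M \<subseteq> H \<and> card M = j} \<union> insert a ` {M. M \<subseteq> H \<and> card M = k}"
      proof (cases "a \<in> M")
        case True
        have "finite M" using M insert finite_subset by blast
        then have "M = insert a (M - {a})" "M - {a} \<subseteq> H" "card (M - {a}) = k" using True M Suc by auto
        then show ?thesis by blast
      next
        case False then show ?thesis using M by auto
      qed
    next
      fix M assume "M \<in> {M. M \<subseteq> H \<and> card M = j} \<union> insert a ` {M. M \<subseteq> H \<and> card M = k}"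
      then show "M \<in> {M. M \<subseteq> insert a H \<and> card M = j}"
      proof
        assume "M \<in> insert a ` {M. M \<subseteq> H \<and> card M = k}"
        then obtain M' where "M = insert a M'" "M' \<subseteq> H" "card M' = k" by auto
        moreover have "finite M'" "a \<notin> M'" using insert \<open>M' \<subseteq> H\<close> finite_subset by auto
        ultimately show ?thesis using Suc by auto
      qed auto
    qed
    have fin1: "finite {M. M \<subseteq> H \<and> card M = j}" using insert by auto
    have fin2: "finite {M. M \<subseteq> H \<and> card M = k}" using insert by auto
    have disj: "{M. M \<subseteq> H \<and> card M = j} \<inter> insert a ` {M. M \<subseteq> H \<and> card M = k} = {}" using insert by auto
    have inj: "inj_on (insert a) {M. M \<subseteq> H \<and> card M = k}"
      using insert unfolding inj_on_def by (metis insert_ident mem_Collect_eq subset_iff)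
    have "(\<Sum>M\<in>{M. M \<subseteq> insert a H \<and> card M = j}. \<Prod>A\<in>M. f A)
        = (\<Sum>M\<in>{M. M \<subseteq> H \<and> card M = j}. \<Prod>A\<in>M. f A) + (\<Sum>M\<in>{M. M \<subseteq> H \<and> card M = k}. \<Prod>A\<in>insert a M. f A)"
      unfolding eq by (simp add: sum.union_disjoint[OF fin1 _ disj] fin2 sum.reindex[OF inj])
    also have "(\<Sum>M\<in>{M. M \<subseteq> H \<and> card M = k}. \<Prod>A\<in>insert a M. f A) = f a * (\<Sum>M\<in>{M. M \<subseteq> H \<and> card M = k}. \<Prod>A\<in>M. f A)"
      unfolding sum_distrib_left
    proof (intro sum.cong refl)
      fix M assume "M \<in> {M. M \<subseteq> H \<and> card M = k}"
      moreover then have "finite M" "a \<notin> M" using insert finite_subset by auto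
      ultimately show "(\<Prod>A\<in>insert a M. f A) = f a * (\<Prod>A\<in>M. f A)" by simp
    qed
    also have "(\<Sum>M\<in>{M. M \<subseteq> H \<and> card M = j}. \<Prod>A\<in>M. f A) + f a * (\<Sum>M\<in>{M. M \<subseteq> H \<and> card M = k}. \<Prod>A\<in>M. f A)
        \<le> s ^ j / fact j + f a * (s ^ k / fact k)"
      using insert.IH[of j] insert.IH[of k] assms(2)[of a] unfolding s_def by (intro add_mono mult_left_mono) auto
    also have "\<dots> = (s ^ Suc k + real (Suc k) * f a * s ^ k) / fact (Suc k)"
    proof -
      have fk: "fact (Suc k) = real (Suc k) * (fact k :: real)" by simp
      have "s ^ Suc k / fact (Suc k) + f a * (s ^ k / fact k) = s ^ Suc k / fact (Suc k) + (real (Suc k) * f a * s ^ k) / fact (Suc k)"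
        unfolding fk by (simp del: of_nat_Suc)
      then show ?thesis using Suc by (simp add: add_divide_distrib)
    qed
    also have "\<dots> \<le> (s + f a) ^ Suc k / fact (Suc k)"
      by (intro divide_right_mono binom_lower s0 assms(2)) simp
    also have "s + f a = (\<Sum>A\<in>insert a H. f A)" using insert unfolding s_def by simp
    finally show ?thesis using Suc by simp
  qed
qed

lemma finite_induced: "finite H \<Longrightarrow> finite (induced H W)"
  unfolding induced_def by simp

lemma mn_ge:
  assumes "finite H" "M \<subseteq> H" "pairwise disjnt M"
  shows "card M \<le> matching_number H"
  unfolding matching_number_def
proof (rule Max_ge)
  show "finite {card M |M. M \<subseteq> H \<and> pairwise disjnt M}"
    by (rule finite_subset[of _ "card ` Pow H"]) (use assms in auto)
qed (use assms in auto)

lemma mn_obtain: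
  assumes "finite H"
  obtains M where "M \<subseteq> H" "pairwise disjnt M" "card M = matching_number H"
proof -
  have "matching_number H \<in> {card M |M. M \<subseteq> H \<and> pairwise disjnt M}"
    unfolding matching_number_def
  proof (rule Max_in)
    show "finite {card M |M. M \<subseteq> H \<and> pairwise disjnt M}"
      by (rule finite_subset[of _ "card ` Pow H"]) (use assms in auto)
    show "{card M |M. M \<subseteq> H \<and> pairwise disjnt M} \<noteq> {}" by auto
  qed
  then show ?thesis using that by auto
qed

lemma mn_mono: "finite H2 \<Longrightarrow> H1 \<subseteq> H2 \<Longrightarrow> matching_number H1 \<le> matching_number H2"
  by (metis finite_subset mn_ge mn_obtain order.trans)

definition dg :: "'a set set \<Rightarrow> real \<Rightarrow> 'a set \<Rightarrow> real" where
  "dg H p A = (\<Sum>B\<in>{B\<in>H. B \<noteq> A \<and> B \<inter> A \<noteq> {}}. p ^ card B)"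

lemma Q_le:
  assumes "finite V" "H \<subseteq> Pow V" "0 \<le> p" "p \<le> 1"
  shows "(\<Sum>A\<in>H. p ^ card A * dg H p A) \<le> 2 * p * Delta_p p H"
proof -
  have fH: "finite H" using assms by (meson finite_Pow_iff finite_subset)
  have fin: "\<And>A. A \<in> H \<Longrightarrow> finite A" using assms finite_subset by blast
  define Od where "Od = Sigma H (\<lambda>A. {B\<in>H. B \<noteq> A \<and> B \<inter> A \<noteq> {}})"
  have fO: "finite Od" unfolding Od_def using fH by auto
  have "(\<Sum>A\<in>H. p ^ card A * dg H p A) = (\<Sum>(A,B)\<in>Od. p ^ card A * p ^ card B)"
    unfolding Od_def dg_def sum_distrib_left using fH by (subst sum.Sigma) auto
  also have "\<dots> \<le> (\<Sum>(A,B)\<in>Od. p * p ^ card (A \<union> B))"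
  proof (rule sum_mono, clarify)
    fix A B assume "(A, B) \<in> Od"
    then have AB: "A \<in> H" "B \<in> H" "B \<inter> A \<noteq> {}" unfolding Od_def by auto
    have "A \<inter> B \<noteq> {}" "finite (A \<inter> B)" using AB fin by (auto simp: Int_commute)
    then have "card (A \<inter> B) \<ge> 1" using card_gt_0_iff[of "A \<inter> B"] by linarith
    moreover have "card A + card B = card (A \<union> B) + card (A \<inter> B)" using card_Un_Int[of A B] fin[OF AB(1)] fin[OF AB(2)] by simp
    ultimately have "card (A \<union> B) + 1 \<le> card A + card B" by linarith
    then have "p ^ (card A + card B) \<le> p ^ (card (A \<union> B) + 1)"
      using assms by (intro power_decreasing) auto
    then show "p ^ card A * p ^ card B \<le> p * p ^ card (A \<union> B)" by (simp add: power_add)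
  qed
  also have "\<dots> = p * (\<Sum>(A,B)\<in>Od. p ^ card (A \<union> B))" by (simp add: sum_distrib_left case_prod_beta)
  also have "(\<Sum>(A,B)\<in>Od. p ^ card (A \<union> B)) = (\<Sum>P\<in>pairs H. \<Sum>x\<in>{x\<in>Od. (\<lambda>(A,B). {A,B}) x = P}. (\<lambda>(A,B). p ^ card (A \<union> B)) x)"
  proof (rule sum.group[symmetric, OF fO finite_pairs[OF fH]])
    show "(\<lambda>(A, B). {A, B}) ` Od \<subseteq> pairs H"
      unfolding Od_def pairs_def by (auto simp: card_2_iff Int_commute)
  qed
  also have "\<dots> = (\<Sum>P\<in>pairs H. 2 * p ^ card (\<Union>P))"
  proof (rule sum.cong[OF refl])
    fix P assume "P \<in> pairs H"
    then have P: "P \<subseteq> H" "card P = 2" "\<Inter>P \<noteq> {}" unfolding pairs_def by auto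
    then obtain X Y where XY0: "P = {X, Y}" "X \<noteq> Y" by (meson card_2_iff)
    have XY: "P = {X, Y}" "X \<noteq> Y" "X \<in> H" "Y \<in> H" "X \<inter> Y \<noteq> {}"
      using XY0 P by auto
    have "{x\<in>Od. (\<lambda>(A,B). {A,B}) x = P} = {(X,Y), (Y,X)}"
    proof (intro equalityI subsetI)
      fix x assume "x \<in> {x\<in>Od. (\<lambda>(A,B). {A,B}) x = P}"
      then obtain A B where "x = (A, B)" "{A, B} = {X, Y}" using XY by (cases x) auto
      then show "x \<in> {(X,Y), (Y,X)}" by (auto simp: doubleton_eq_iff)
    next
      fix x assume "x \<in> {(X,Y), (Y,X)}"
      moreover have "(X, Y) \<in> Od" "(Y, X) \<in> Od" using XY unfolding Od_def by (auto simp: Int_commute)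
      ultimately show "x \<in> {x\<in>Od. (\<lambda>(A,B). {A,B}) x = P}" using XY by auto
    qed
    then show "(\<Sum>x\<in>{x\<in>Od. (\<lambda>(A,B). {A,B}) x = P}. (\<lambda>(A,B). p ^ card (A \<union> B)) x) = 2 * p ^ card (\<Union>P)"
      using XY by (simp add: Un_commute)
  qed
  finally show ?thesis unfolding Delta_pairs by (simp add: sum_distrib_left algebra_simps)
qed

lemma cover_step:
  assumes fH: "finite H" and ne: "{} \<notin> H" and H': "H' \<subseteq> H"
    and ev: "matching_number (induced H W) \<le> n"
  shows "\<exists>M. M \<subseteq> H' \<and> pairwise disjnt M \<and> card M \<le> n \<and>
           (\<Union>M \<subseteq> W \<and> (\<forall>B\<in>H'. B \<inter> \<Union>M = {} \<longrightarrow> \<not> B \<subseteq> W))"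
proof -
  have fH': "finite H'" using fH H' finite_subset by blast
  have fI: "finite (induced H' W)" using fH' by (rule finite_induced)
  obtain M where M: "M \<subseteq> induced H' W" "pairwise disjnt M" "card M = matching_number (induced H' W)"
    using mn_obtain[OF fI] by blast
  have "matching_number (induced H' W) \<le> matching_number (induced H W)"
    using H' by (intro mn_mono finite_induced fH) (auto simp: induced_def)
  then have cM: "card M \<le> n" using M ev by linarith
  have MH: "M \<subseteq> H'" "\<Union>M \<subseteq> W" using M(1) unfolding induced_def by auto
  have fM: "finite M" using MH fH' finite_subset by blast
  have "\<forall>B\<in>H'. B \<inter> \<Union>M = {} \<longrightarrow> \<not> B \<subseteq> W"
  proof (intro ballI impI notI)
    fix B assume B: "B \<in> H'" "B \<inter> \<Union>M = {}" "B \<subseteq> W"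
    have Bne: "B \<noteq> {}" using B ne H' by auto
    have BM: "B \<notin> M" using B Bne by auto
    have "insert B M \<subseteq> induced H' W" using M B unfolding induced_def by auto
    moreover have "pairwise disjnt (insert B M)"
      unfolding pairwise_insert using M(2) B(2) by (auto simp: disjnt_def)
    ultimately have "card (insert B M) \<le> matching_number (induced H' W)"
      by (intro mn_ge fI)
    then show False using M(3) BM fM by simp
  qed
  then show ?thesis using MH M(2) cM by blast
qed

lemma prob_F:
  assumes V: "finite V" and H: "H \<subseteq> Pow V" and ne: "{} \<notin> H" and p: "0 \<le> p" "p \<le> 1" and t: "0 \<le> t"
    and H'def: "H' = {A\<in>H. dg H p A \<le> t}"
    and M: "M \<subseteq> H'" "pairwise disjnt M" "card M \<le> n"
  shows "prob_rand_subset V p (\<lambda>W. \<Union>M \<subseteq> W \<and> (\<forall>B\<in>H'. B \<inter> \<Union>M = {} \<longrightarrow> \<not> B \<subseteq> W))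
     \<le> (\<Prod>A\<in>M. p ^ card A) * exp (- mu_p p H' + Delta_p p H + (p + t) * n)"
proof -
  have fH: "finite H" using H V by (meson finite_Pow_iff finite_subset)
  have H'H: "H' \<subseteq> H" using H'def by auto
  have fH': "finite H'" using fH H'H finite_subset by blast
  have fM: "finite M" using M fH' finite_subset by blast
  have finA: "\<And>A. A \<in> H \<Longrightarrow> finite A" using H V finite_subset by blast
  define U where "U = \<Union>M"
  define HU where "HU = {B\<in>H'. B \<inter> U = {}}"
  have UV: "U \<subseteq> V" unfolding U_def using M H'H H by blast
  have HUV: "HU \<subseteq> Pow (V - U)" unfolding HU_def using H'H H by blast
  have "prob_rand_subset V p (\<lambda>W. U \<subseteq> W \<and> (\<forall>B\<in>H'. B \<inter> U = {} \<longrightarrow> \<not> B \<subseteq> W))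
      = p ^ card U * prob_rand_subset (V - U) p (\<lambda>W. (\<forall>B\<in>H'. B \<inter> U = {} \<longrightarrow> \<not> B \<subseteq> U \<union> W))"
    by (rule prob_contains[OF V UV])
  also have "prob_rand_subset (V - U) p (\<lambda>W. (\<forall>B\<in>H'. B \<inter> U = {} \<longrightarrow> \<not> B \<subseteq> U \<union> W))
      = prob_rand_subset (V - U) p (\<lambda>W. \<forall>B\<in>HU. \<not> B \<subseteq> W)"
    unfolding HU_def by (intro prob_cong) blast
  also have "\<dots> \<le> exp (- mu_p p HU + Delta_p p HU)"
    by (rule janson[OF _ HUV p]) (use V in simp)
  also have "\<dots> \<le> exp (- mu_p p H' + Delta_p p H + (p + t) * n)"
  proof -
    have D: "Delta_p p HU \<le> Delta_p p H" using HU_def H'H fH p by (intro Delta_mono) auto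
    have "mu_p p H' = mu_p p HU + (\<Sum>B\<in>H' - HU. p ^ card B)"
      unfolding mu_p_def using sum.subset_diff[of HU H' "\<lambda>B. p ^ card B"] fH' HU_def by auto
    also have "(\<Sum>B\<in>H' - HU. p ^ card B) \<le> (\<Sum>B\<in>(\<Union>A\<in>M. {B\<in>H'. B \<inter> A \<noteq> {}}). p ^ card B)"
    proof (rule sum_mono2)
      show "finite (\<Union>A\<in>M. {B\<in>H'. B \<inter> A \<noteq> {}})" by (rule finite_subset[OF _ fH']) auto
    qed (use p in \<open>auto simp: HU_def U_def\<close>)
    also have "\<dots> \<le> (\<Sum>A\<in>M. \<Sum>B\<in>{B\<in>H'. B \<inter> A \<noteq> {}}. p ^ card B)"
      by (rule sum_UN_le_nonneg) (use fM fH' p in auto)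
    also have "\<dots> \<le> (\<Sum>A\<in>M. p + t)"
    proof (rule sum_mono)
      fix A assume AM: "A \<in> M"
      have AH': "A \<in> H'" and AH: "A \<in> H" using AM M H'H by auto
      have Ane: "A \<noteq> {}" using AH ne by auto
      have fA: "finite A" using finA AH by blast
      have "(\<Sum>B\<in>{B\<in>H'. B \<inter> A \<noteq> {}}. p ^ card B) = p ^ card A + (\<Sum>B\<in>{B\<in>H'. B \<inter> A \<noteq> {}} - {A}. p ^ card B)"
        by (rule sum.remove) (use fH' AH' Ane in auto)
      also have "(\<Sum>B\<in>{B\<in>H'. B \<inter> A \<noteq> {}} - {A}. p ^ card B) \<le> dg H p A"
        unfolding dg_def by (rule sum_mono2) (use fH H'H p in auto)
      also have "dg H p A \<le> t" using AH' H'def by auto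
      also have "p ^ card A \<le> p ^ 1"
        using p fA Ane by (intro power_decreasing) (auto simp: Suc_le_eq card_gt_0_iff)
      finally show "(\<Sum>B\<in>{B\<in>H'. B \<inter> A \<noteq> {}}. p ^ card B) \<le> p + t" by simp
    qed
    also have "\<dots> = real (card M) * (p + t)" by simp
    also have "\<dots> \<le> real n * (p + t)" using M(3) p t by (intro mult_right_mono) auto
    finally show ?thesis using D by (simp add: algebra_simps)
  qed
  finally have *: "prob_rand_subset V p (\<lambda>W. U \<subseteq> W \<and> (\<forall>B\<in>H'. B \<inter> U = {} \<longrightarrow> \<not> B \<subseteq> W))
     \<le> p ^ card U * exp (- mu_p p H' + Delta_p p H + (p + t) * n)"
    using p by (simp add: mult_left_mono)
  have "card U = (\<Sum>A\<in>M. card A)" unfolding U_def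
    by (rule card_Union_disjoint[OF M(2)]) (use M H'H finA in auto)
  then have "p ^ card U = (\<Prod>A\<in>M. p ^ card A)" by (simp add: power_sum)
  then show ?thesis using * unfolding U_def by simp
qed

lemma core:
  assumes V: "finite V" and H: "H \<subseteq> Pow V" and ne: "{} \<notin> H" and p: "0 \<le> p" "p \<le> 1" and t: "0 \<le> t"
  defines "H' \<equiv> {A\<in>H. dg H p A \<le> t}"
  shows "prob_rand_subset V p (\<lambda>W. matching_number (induced H W) \<le> n)
     \<le> exp (- mu_p p H' + Delta_p p H + (p + t) * n) * (\<Sum>j\<le>n. mu_p p H' ^ j / fact j)"
proof -
  have fH: "finite H" using H V by (meson finite_Pow_iff finite_subset)
  have H'H: "H' \<subseteq> H" unfolding H'_def by auto
  have fH': "finite H'" using fH H'H finite_subset by blast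
  define Ms where "Ms = {M. M \<subseteq> H' \<and> pairwise disjnt M \<and> card M \<le> n}"
  define K where "K = exp (- mu_p p H' + Delta_p p H + (p + t) * n)"
  have fMs: "finite Ms" unfolding Ms_def by (rule finite_subset[of _ "Pow H'"]) (use fH' in auto)
  have "prob_rand_subset V p (\<lambda>W. matching_number (induced H W) \<le> n)
      \<le> prob_rand_subset V p (\<lambda>W. \<exists>M\<in>Ms. \<Union>M \<subseteq> W \<and> (\<forall>B\<in>H'. B \<inter> \<Union>M = {} \<longrightarrow> \<not> B \<subseteq> W))"
  proof (rule prob_mono[OF V p])
    fix W assume "matching_number (induced H W) \<le> n"
    from cover_step[OF fH ne H'H this] show "\<exists>M\<in>Ms. \<Union>M \<subseteq> W \<and> (\<forall>B\<in>H'. B \<inter> \<Union>M = {} \<longrightarrow> \<not> B \<subseteq> W)"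
      unfolding Ms_def by blast
  qed
  also have "\<dots> \<le> (\<Sum>M\<in>Ms. prob_rand_subset V p (\<lambda>W. \<Union>M \<subseteq> W \<and> (\<forall>B\<in>H'. B \<inter> \<Union>M = {} \<longrightarrow> \<not> B \<subseteq> W)))"
    by (rule union_bound[OF V fMs p])
  also have "\<dots> \<le> (\<Sum>M\<in>Ms. (\<Prod>A\<in>M. p ^ card A) * K)"
  proof (rule sum_mono)
    fix M assume "M \<in> Ms"
    then show "prob_rand_subset V p (\<lambda>W. \<Union>M \<subseteq> W \<and> (\<forall>B\<in>H'. B \<inter> \<Union>M = {} \<longrightarrow> \<not> B \<subseteq> W)) \<le> (\<Prod>A\<in>M. p ^ card A) * K"
      unfolding K_def Ms_def by (intro prob_F[OF V H ne p t]) (auto simp: H'_def)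
  qed
  also have "\<dots> = K * (\<Sum>M\<in>Ms. \<Prod>A\<in>M. p ^ card A)" by (simp add: sum_distrib_left mult.commute)
  also have "(\<Sum>M\<in>Ms. \<Prod>A\<in>M. p ^ card A) \<le> (\<Sum>M\<in>{M. M \<subseteq> H' \<and> card M \<le> n}. \<Prod>A\<in>M. p ^ card A)"
  proof (rule sum_mono2)
    show "finite {M. M \<subseteq> H' \<and> card M \<le> n}" by (rule finite_subset[of _ "Pow H'"]) (use fH' in auto)
  qed (use p in \<open>auto simp: Ms_def prod_nonneg\<close>)
  also have "{M. M \<subseteq> H' \<and> card M \<le> n} = (\<Union>j\<in>{..n}. {M. M \<subseteq> H' \<and> card M = j})" by auto
  also have "(\<Sum>M\<in>(\<Union>j\<in>{..n}. {M. M \<subseteq> H' \<and> card M = j}). \<Prod>A\<in>M. p ^ card A)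
      = (\<Sum>j\<le>n. \<Sum>M\<in>{M. M \<subseteq> H' \<and> card M = j}. \<Prod>A\<in>M. p ^ card A)"
    by (rule sum.UNION_disjoint) (use fH' in auto)
  also have "\<dots> \<le> (\<Sum>j\<le>n. mu_p p H' ^ j / fact j)"
    unfolding mu_p_def by (intro sum_mono esym_bound fH') (use p in simp)
  finally show ?thesis unfolding K_def using p by (simp add: mult_left_mono)
qed

lemma exp_partial: "0 \<le> (a::real) \<Longrightarrow> (\<Sum>j\<le>n. a ^ j / fact j) \<le> exp a"
proof -
  assume a: "0 \<le> a"
  have s: "(\<lambda>j. a ^ j / fact j) sums exp a" using exp_converges[of a] by (simp add: divide_inverse mult.commute)
  have "(\<Sum>j\<le>n. a ^ j / fact j) = (\<Sum>j<Suc n. a ^ j / fact j)" by (simp add: lessThan_Suc_atMost)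
  also have "\<dots> \<le> (\<Sum>j. a ^ j / fact j)"
    by (rule sum_le_suminf[OF sums_summable[OF s]]) (use a in auto)
  also have "\<dots> = exp a" using s sums_unique by metis
  finally show ?thesis .
qed

lemma T_bound:
  fixes a y :: real
  assumes "0 < a" "a \<le> y" "real n \<le> a"
  shows "(\<Sum>j\<le>n. y ^ j / fact j) \<le> exp (a * ln (exp 1 * y / a))"
proof -
  have ya: "1 \<le> y / a" using assms by simp
  have "(\<Sum>j\<le>n. y ^ j / fact j) \<le> (\<Sum>j\<le>n. (y / a) powr a * (a ^ j / fact j))"
  proof (rule sum_mono)
    fix j assume "j \<in> {..n}"
    then have ja: "real j \<le> a" using assms by simp
    have "y ^ j = (y / a) ^ j * a ^ j" using assms by (simp add: power_divide)
    also have "(y / a) ^ j = (y / a) powr real j" using ya by (simp add: powr_realpow)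
    also have "\<dots> \<le> (y / a) powr a" using ya ja by (intro powr_mono) auto
    finally have "y ^ j \<le> (y / a) powr a * a ^ j" using assms by (simp add: mult_right_mono)
    then show "y ^ j / fact j \<le> (y / a) powr a * (a ^ j / fact j)"
      by (simp add: divide_right_mono)
  qed
  also have "\<dots> = (y / a) powr a * (\<Sum>j\<le>n. a ^ j / fact j)" by (simp add: sum_distrib_left)
  also have "\<dots> \<le> (y / a) powr a * exp a" using assms by (intro mult_left_mono exp_partial) auto
  also have "\<dots> = exp (a * ln (exp 1 * y / a))"
    using assms by (simp add: powr_def ln_mult ln_div mult_exp_exp algebra_simps)
  finally show ?thesis .
qed

lemma ln_shift:
  fixes a m :: real
  assumes "0 < a" "a \<le> m"
  shows "a * ln (m / a) \<le> (a + 1) * ln ((m + 1) / (a + 1))"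
proof -
  define r where "r = m / a"
  define l where "l = a / (a + 1)"
  have r1: "1 \<le> r" unfolding r_def using assms by simp
  have l: "0 < l" "l < 1" unfolding l_def using assms by auto
  define q where "q = l * r + 1 - l"
  have q: "0 < q" unfolding q_def using l r1 by (smt (verit) mult_pos_pos)
  have la: "l * (a + 1) = a" unfolding l_def using assms by simp
  have ra: "a * r = m" unfolding r_def using assms by simp
  have "q * (a + 1) = (l * (a + 1)) * r + (a + 1) - l * (a + 1)" unfolding q_def by (simp add: algebra_simps)
  also have "\<dots> = m + 1" using la ra by (simp add: algebra_simps)
  finally have qeq: "q = (m + 1) / (a + 1)" using assms by (simp add: field_simps)
  have "ln (r / q) \<le> r / q - 1" using q r1 by (intro ln_le_minus_one) auto
  moreover have "ln (1 / q) \<le> 1 / q - 1" using q by (intro ln_le_minus_one) auto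
  ultimately have "l * ln (r / q) + (1 - l) * ln (1 / q) \<le> l * (r / q - 1) + (1 - l) * (1 / q - 1)"
    using l by (intro add_mono mult_left_mono) auto
  also have "\<dots> = 0" using q unfolding q_def by (simp add: field_simps)
  finally have "l * ln r - ln q \<le> 0" using q r1 l by (simp add: ln_div algebra_simps)
  then have "l * ln r \<le> ln q" by simp
  then have "(a + 1) * (l * ln r) \<le> (a + 1) * ln q" using assms by (intro mult_left_mono) auto
  moreover have "(a + 1) * (l * ln r) = a * ln (m / a)" unfolding l_def r_def using assms by simp
  ultimately show ?thesis using qeq by simp
qed

lemma mu_diff:
  assumes V: "finite V" and H: "H \<subseteq> Pow V" and p: "0 \<le> p" "p \<le> 1" and t: "0 < t"
  shows "mu_p p H - mu_p p {A\<in>H. dg H p A \<le> t} \<le> 2 * p * Delta_p p H / t"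
proof -
  have fH: "finite H" using H V by (meson finite_Pow_iff finite_subset)
  have dg0: "\<And>A. 0 \<le> dg H p A" unfolding dg_def using p by (simp add: sum_nonneg)
  have "mu_p p H = (\<Sum>A\<in>H - {A\<in>H. dg H p A \<le> t}. p ^ card A) + mu_p p {A\<in>H. dg H p A \<le> t}"
    unfolding mu_p_def by (rule sum.subset_diff) (use fH in auto)
  moreover have "(\<Sum>A\<in>H - {A\<in>H. dg H p A \<le> t}. p ^ card A) \<le> (\<Sum>A\<in>H - {A\<in>H. dg H p A \<le> t}. p ^ card A * dg H p A / t)"
  proof (rule sum_mono)
    fix A assume "A \<in> H - {A\<in>H. dg H p A \<le> t}"
    then have "t \<le> dg H p A" by auto
    then have "p ^ card A * t \<le> p ^ card A * dg H p A" using p by (intro mult_left_mono) auto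
    then show "p ^ card A \<le> p ^ card A * dg H p A / t" using t by (simp add: field_simps)
  qed
  moreover have "(\<Sum>A\<in>H - {A\<in>H. dg H p A \<le> t}. p ^ card A * dg H p A / t) \<le> (\<Sum>A\<in>H. p ^ card A * dg H p A / t)"
    by (rule sum_mono2) (use fH p t dg0 in auto)
  moreover have "(\<Sum>A\<in>H. p ^ card A * dg H p A / t) = (\<Sum>A\<in>H. p ^ card A * dg H p A) / t"
    by (simp add: sum_divide_distrib)
  moreover have "(\<Sum>A\<in>H. p ^ card A * dg H p A) / t \<le> 2 * p * Delta_p p H / t"
    using Q_le[OF V H p] t by (simp add: divide_right_mono)
  ultimately show ?thesis by linarith
qed

lemma mu_empty: "finite H \<Longrightarrow> mu_p p H = mu_p p (H - {{}}) + (if {} \<in> H then 1 else 0)"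
  unfolding mu_p_def by (cases "{} \<in> H") (auto simp: sum.remove)

lemma Delta_empty: "Delta_p p H = Delta_p p (H - {{}})"
proof -
  have "pairs H = pairs (H - {{}})"
  proof (intro equalityI subsetI)
    fix P assume P: "P \<in> pairs H"
    have "{} \<notin> P"
    proof
      assume "{} \<in> P" then have "\<Inter>P \<subseteq> {}" by blast
      then show False using P unfolding pairs_def by blast
    qed
    then show "P \<in> pairs (H - {{}})" using P unfolding pairs_def by blast
  next
    fix P assume "P \<in> pairs (H - {{}})" then show "P \<in> pairs H" unfolding pairs_def by blast
  qed
  then show ?thesis unfolding Delta_pairs by simp
qed

lemma mn_empty:
  assumes "finite H" "{} \<in> H"
  shows "matching_number (induced (H - {{}}) W) + 1 \<le> matching_number (induced H W)"
proof -
  obtain M where M: "M \<subseteq> induced (H - {{}}) W" "pairwise disjnt M" "card M = matching_number (induced (H - {{}}) W)"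
    using mn_obtain[OF finite_induced[of "H - {{}}" W]] assms by auto
  have "M \<subseteq> H" using M(1) unfolding induced_def by blast
  then have fM: "finite M" using assms(1) by (rule finite_subset)
  have "insert {} M \<subseteq> induced H W" using M(1) assms unfolding induced_def by auto
  moreover have "pairwise disjnt (insert {} M)" using M(2) unfolding pairwise_insert by (auto simp: disjnt_def)
  ultimately have "card (insert {} M) \<le> matching_number (induced H W)" by (intro mn_ge finite_induced assms)
  moreover have "{} \<notin> M" using M(1) unfolding induced_def by auto
  ultimately show ?thesis using M(3) fM by simp
qed

lemma B4:
  fixes c m \<alpha> a :: real
  assumes c: "c = 0 \<or> c = 1" and m: "0 \<le> m" and al: "0 < \<alpha>" "\<alpha> \<le> 1"
    and a: "a = \<alpha> * (m + c) - c" "0 \<le> a" "real n \<le> a"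
  shows "(\<Sum>j\<le>n. m ^ j / fact j) \<le> exp (- c + \<alpha> * (m + c) * ln (exp 1 / \<alpha>))"
proof (cases "a = 0")
  case True
  then have n: "n = 0" using a by simp
  have "\<alpha> * (m + c) = c" using True a by simp
  moreover have "ln (exp 1 / \<alpha>) = 1 - ln \<alpha>" using al by (simp add: ln_div)
  moreover have "ln \<alpha> \<le> 0" using al by simp
  ultimately have "0 \<le> - c + \<alpha> * (m + c) * ln (exp 1 / \<alpha>)" using c by auto
  then show ?thesis using n by simp
next
  case False
  then have a0: "0 < a" using a by simp
  have "\<alpha> * (m + c) \<le> m + c" using m c al by (intro mult_left_le_one_le) auto
  then have am: "a \<le> m" using a by linarith
  have m0: "0 < m" using a0 am by simp
  have "(\<Sum>j\<le>n. m ^ j / fact j) \<le> exp (a * ln (exp 1 * m / a))" by (rule T_bound[OF a0 am a(3)])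
  also have "a * ln (exp 1 * m / a) \<le> - c + \<alpha> * (m + c) * ln (exp 1 / \<alpha>)"
  proof -
    have e1: "a * ln (exp 1 * m / a) = a + a * ln (m / a)" using a0 m0 by (simp add: ln_mult ln_div algebra_simps)
    show ?thesis using c
    proof
      assume c0: "c = 0"
      then have "a = \<alpha> * m" using a by simp
      then have "exp 1 * m / a = exp 1 / \<alpha>" using m0 al by simp
      then show ?thesis using c0 \<open>a = \<alpha> * m\<close> by simp
    next
      assume c1: "c = 1"
      have aa: "\<alpha> * (m + c) = a + 1" using a c1 by simp
      have "\<alpha> = (a + 1) / (m + 1)" using aa c1 m0 by (simp add: field_simps)
      then have "exp 1 / \<alpha> = exp 1 * ((m + 1) / (a + 1))" using a0 m0 by simp
      moreover have "ln (exp 1 * ((m + 1) / (a + 1))) = ln (exp 1) + ln ((m + 1) / (a + 1))"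
        using a0 m0 by (intro ln_mult_pos) auto
      ultimately have "ln (exp 1 / \<alpha>) = 1 + ln ((m + 1) / (a + 1))" by simp
      then have "- c + \<alpha> * (m + c) * ln (exp 1 / \<alpha>) = a + (a + 1) * ln ((m + 1) / (a + 1))"
        using aa c1 by (simp add: algebra_simps)
      moreover have "a * ln (m / a) \<le> (a + 1) * ln ((m + 1) / (a + 1))" by (rule ln_shift[OF a0 am])
      ultimately show ?thesis using e1 by simp
    qed
  qed
  finally show ?thesis by simp
qed

theorem mainTheorem2:
  fixes V :: "'a set" and H :: "'a set set" and p \<alpha> \<eta> :: real
  assumes "finite V" and "H \<subseteq> Pow V"
    and "0 \<le> p" and "p \<le> 1"
    and "0 < \<alpha>" and "\<alpha> \<le> 1"
    and "0 < \<eta>" and "\<eta> \<le> 1"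
  shows "prob_rand_subset V p (\<lambda>W. real (matching_number (induced H W)) \<le> \<alpha> * mu_p p H)
     \<le> exp (- (1 - \<alpha> * ln (exp 1 / \<alpha>) - \<alpha> * p - \<eta>) * mu_p p H
             + (1 + 2 * \<alpha> * p / \<eta>) * Delta_p p H)"
proof -
  note V = assms(1) and H = assms(2) and p = assms(3,4) and al = assms(5,6) and et = assms(7,8)
  have fH: "finite H" using H V by (meson finite_Pow_iff finite_subset)
  define H0 where "H0 = H - {{}}"
  define c :: real where "c = (if {} \<in> H then 1 else 0)"
  define \<mu> where "\<mu> = mu_p p H"
  define \<mu>0 where "\<mu>0 = mu_p p H0"
  define \<Delta> where "\<Delta> = Delta_p p H"
  define t where "t = \<eta> / \<alpha>"
  define H0' where "H0' = {A\<in>H0. dg H0 p A \<le> t}"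
  define \<mu>' where "\<mu>' = mu_p p H0'"
  define RHS where "RHS = exp (- (1 - \<alpha> * ln (exp 1 / \<alpha>) - \<alpha> * p - \<eta>) * \<mu> + (1 + 2 * \<alpha> * p / \<eta>) * \<Delta>)"
  have t0: "0 < t" unfolding t_def using al et by simp
  have H0V: "H0 \<subseteq> Pow V" and ne: "{} \<notin> H0" and fH0: "finite H0" unfolding H0_def using H fH by auto
  have c01: "c = 0 \<or> c = 1" unfolding c_def by simp
  have mueq: "\<mu> = \<mu>0 + c" unfolding \<mu>_def \<mu>0_def c_def H0_def by (rule mu_empty[OF fH])
  have Deq: "\<Delta> = Delta_p p H0" unfolding \<Delta>_def H0_def by (rule Delta_empty)
  have mu00: "0 \<le> \<mu>0" unfolding \<mu>0_def using p(1) by (rule mu_nonneg)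
  have mu'0: "0 \<le> \<mu>'" unfolding \<mu>'_def using p(1) by (rule mu_nonneg)
  have mu'le: "\<mu>' \<le> \<mu>0" unfolding \<mu>'_def \<mu>0_def mu_p_def H0'_def
    by (rule sum_mono2) (use fH0 p in auto)
  have D0: "0 \<le> \<Delta>" unfolding \<Delta>_def using p(1) by (rule Delta_nonneg)
  have mndiff: "\<mu>0 - \<mu>' \<le> 2 * \<alpha> * p * \<Delta> / \<eta>"
  proof -
    have "\<mu>0 - \<mu>' \<le> 2 * p * Delta_p p H0 / t"
      unfolding \<mu>0_def \<mu>'_def H0'_def by (rule mu_diff[OF V H0V p t0])
    also have "\<dots> = 2 * \<alpha> * p * \<Delta> / \<eta>" unfolding t_def Deq using al et by (simp add: field_simps)
    finally show ?thesis .
  qed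
  have nu: "real (matching_number (induced H0 W)) + c \<le> real (matching_number (induced H W))" for W
  proof (cases "{} \<in> H")
    case True
    then have "matching_number (induced H0 W) + 1 \<le> matching_number (induced H W)"
      unfolding H0_def by (rule mn_empty[OF fH])
    then show ?thesis unfolding c_def using True by simp
  next
    case False
    then have "H0 = H" unfolding H0_def by auto
    then show ?thesis unfolding c_def using False by simp
  qed
  have RHS0: "0 \<le> RHS" unfolding RHS_def by simp
  show ?thesis
  proof (cases "\<alpha> * \<mu> - c < 0")
    case True
    have "prob_rand_subset V p (\<lambda>W. real (matching_number (induced H W)) \<le> \<alpha> * mu_p p H) \<le> prob_rand_subset V p (\<lambda>W. False)"
    proof (rule prob_mono[OF V p])
      fix W assume "real (matching_number (induced H W)) \<le> \<alpha> * mu_p p H"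
      then show False using nu[of W] True unfolding \<mu>_def by simp
    qed
    also have "\<dots> = 0" by (simp add: prob_rand_subset_def)
    finally show ?thesis using RHS0 unfolding RHS_def \<mu>_def \<Delta>_def by (rule order.trans)
  next
    case False
    define a where "a = \<alpha> * \<mu> - c"
    define n where "n = nat \<lfloor>a\<rfloor>"
    have a0: "0 \<le> a" using False unfolding a_def by simp
    have na: "real n \<le> a" unfolding n_def using a0 by linarith
    have "prob_rand_subset V p (\<lambda>W. real (matching_number (induced H W)) \<le> \<alpha> * mu_p p H)
        \<le> prob_rand_subset V p (\<lambda>W. matching_number (induced H0 W) \<le> n)"
    proof (rule prob_mono[OF V p])
      fix W assume "real (matching_number (induced H W)) \<le> \<alpha> * mu_p p H"
      then have "real (matching_number (induced H0 W)) \<le> a" using nu[of W] unfolding a_def \<mu>_def by simp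
      then show "matching_number (induced H0 W) \<le> n" unfolding n_def by (simp add: le_nat_floor)
    qed
    also have "\<dots> \<le> exp (- \<mu>' + \<Delta> + (p + t) * n) * (\<Sum>j\<le>n. \<mu>' ^ j / fact j)"
      unfolding \<mu>'_def H0'_def Deq using core[OF V H0V ne p] t0 by simp
    also have "\<dots> \<le> exp (- \<mu>' + \<Delta> + (\<alpha> * p * \<mu> + \<eta> * \<mu>)) * exp (- c + \<alpha> * (\<mu>0 + c) * ln (exp 1 / \<alpha>))"
    proof (intro mult_mono)
      have "(p + t) * n \<le> (p + t) * a" using na p t0 by (intro mult_left_mono) auto
      also have "\<dots> = p * a + (\<eta> / \<alpha>) * a" unfolding t_def by (simp add: algebra_simps)
      also have "\<dots> \<le> p * (\<alpha> * \<mu>) + (\<eta> / \<alpha>) * (\<alpha> * \<mu>)"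
        using p al et c01 a0 unfolding a_def by (intro add_mono mult_left_mono) auto
      also have "\<dots> = \<alpha> * p * \<mu> + \<eta> * \<mu>" using al by simp
      finally show "exp (- \<mu>' + \<Delta> + (p + t) * n) \<le> exp (- \<mu>' + \<Delta> + (\<alpha> * p * \<mu> + \<eta> * \<mu>))" by simp
      have "(\<Sum>j\<le>n. \<mu>' ^ j / fact j) \<le> (\<Sum>j\<le>n. \<mu>0 ^ j / fact j)"
        using mu'0 mu'le by (intro sum_mono divide_right_mono power_mono) auto
      also have "\<dots> \<le> exp (- c + \<alpha> * (\<mu>0 + c) * ln (exp 1 / \<alpha>))"
        by (rule B4[OF c01 mu00 al _ a0 na]) (simp add: a_def mueq)
      finally show "(\<Sum>j\<le>n. \<mu>' ^ j / fact j) \<le> exp (- c + \<alpha> * (\<mu>0 + c) * ln (exp 1 / \<alpha>))" .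
    qed (use mu'0 in \<open>auto intro!: sum_nonneg\<close>)
    also have "\<dots> = exp (- \<mu>' + \<Delta> + (\<alpha> * p * \<mu> + \<eta> * \<mu>) - c + \<alpha> * \<mu> * ln (exp 1 / \<alpha>))"
      unfolding mueq mult_exp_exp by (simp add: algebra_simps)
    also have "\<dots> \<le> RHS"
    proof -
      have "- \<mu>' + \<Delta> + (\<alpha> * p * \<mu> + \<eta> * \<mu>) - c + \<alpha> * \<mu> * ln (exp 1 / \<alpha>)
          \<le> - (1 - \<alpha> * ln (exp 1 / \<alpha>) - \<alpha> * p - \<eta>) * \<mu> + (1 + 2 * \<alpha> * p / \<eta>) * \<Delta>"
      proof -
        have "(1 + 2 * \<alpha> * p / \<eta>) * \<Delta> = \<Delta> + 2 * \<alpha> * p * \<Delta> / \<eta>" by (simp add: algebra_simps)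
        then show ?thesis using mndiff mueq by (simp add: algebra_simps)
      qed
      then show ?thesis unfolding RHS_def by simp
    qed
    finally show ?thesis unfolding RHS_def \<mu>_def \<Delta>_def .
  qed
qed

end
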